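(* For every formula $A$ of $\mathrm{SN}$: $A$ is true at both worlds $1$ and $2$ of every $\mathrm{SN}$-model if and only if $\mathrm{SN}\vdash A$.
   Context: Formulas of $\mathrm{SN}$ are built from propositional atoms $p$, constants $\top,\bot$ and a propositional constant $t$, using $\neg,\wedge,\vee,\to$ and a unary connective $N$ (applicable to any formula, iterable). Proof system: $\mathrm{SN}\vdash A$ is generated by all classical tautologies; axioms (K) $N(A\wedge B)\leftrightarrow NA\vee NB$; (F) $\neg NA\leftrightarrow N\neg A$; (C) $A\to NNA$; (A) $t\to(p\to N\neg p)$ for atoms $p$; (T) $t\leftrightarrow Nt$; rules modus ponens and (N): from $A$ infer $N\neg A$. Semantics: an $\mathrm{SN}$-model is $M=(\{1,2\},v)$ where $v$ assigns to each atom $p$ a subset $v(p)\subseteq\{1,2\}$ such that $1\in v(p)$ implies $2\in v(p)$. Truth at $m\in\{1,2\}$: $m\vDash p$ iff $m\in v(p)$; $m\vDash\top$; $m\nvDash\bot$; $m\vDash t$ iff $m=1$; classical clauses for $\neg,\wedge,\vee,\to$ at each world; $1\vDash NA$ iff $2\nvDash A$, and $2\vDash NA$ iff $1\nvDash A$. *)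

theory Defs
  imports Main
begin

datatype 'a fm = Atom 'a | Top | Bot | TT | Neg "'a fm" | Conj "'a fm" "'a fm"
  | Disj "'a fm" "'a fm" | Imp "'a fm" "'a fm" | N "'a fm"

definition Iff :: "'a fm \<Rightarrow> 'a fm \<Rightarrow> 'a fm" where
  "Iff A B = Conj (Imp A B) (Imp B A)"

fun ceval :: "('a fm \<Rightarrow> bool) \<Rightarrow> 'a fm \<Rightarrow> bool" where
  "ceval w (Atom p) = w (Atom p)"
| "ceval w Top = True"
| "ceval w Bot = False"
| "ceval w TT = w TT"
| "ceval w (Neg A) = (\<not> ceval w A)"
| "ceval w (Conj A B) = (ceval w A \<and> ceval w B)"
| "ceval w (Disj A B) = (ceval w A \<or> ceval w B)"
| "ceval w (Imp A B) = (ceval w A \<longrightarrow> ceval w B)"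
| "ceval w (N A) = w (N A)"

definition tautology :: "'a fm \<Rightarrow> bool" where
  "tautology A = (\<forall>w. ceval w A)"

inductive SN_prov :: "'a fm \<Rightarrow> bool" where
  taut: "tautology A \<Longrightarrow> SN_prov A"
| K: "SN_prov (Iff (N (Conj A B)) (Disj (N A) (N B)))"
| F: "SN_prov (Iff (Neg (N A)) (N (Neg A)))"
| C: "SN_prov (Imp A (N (N A)))"
| A: "SN_prov (Imp TT (Imp (Atom p) (N (Neg (Atom p)))))"
| T: "SN_prov (Iff TT (N TT))"
| MP: "SN_prov (Imp A B) \<Longrightarrow> SN_prov A \<Longrightarrow> SN_prov B"
| Nec: "SN_prov A \<Longrightarrow> SN_prov (N (Neg A))"

definition SN_model :: "('a \<Rightarrow> nat set) \<Rightarrow> bool" where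
  "SN_model v = (\<forall>p. v p \<subseteq> {1, 2} \<and> (1 \<in> v p \<longrightarrow> 2 \<in> v p))"

fun sat :: "('a \<Rightarrow> nat set) \<Rightarrow> nat \<Rightarrow> 'a fm \<Rightarrow> bool" where
  "sat v m (Atom p) = (m \<in> v p)"
| "sat v m Top = True"
| "sat v m Bot = False"
| "sat v m TT = (m = 1)"
| "sat v m (Neg A) = (\<not> sat v m A)"
| "sat v m (Conj A B) = (sat v m A \<and> sat v m B)"
| "sat v m (Disj A B) = (sat v m A \<or> sat v m B)"
| "sat v m (Imp A B) = (sat v m A \<longrightarrow> sat v m B)"
| "sat v m (N A) = (if m = 1 then \<not> sat v 2 A else \<not> sat v 1 A)"

end

theory Submission
  imports Defs
begin

lemma ceval_sat: "ceval (sat v m) A = sat v m A"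
  by (induction A) auto

lemma soundness: "SN_prov A \<Longrightarrow> SN_model v \<Longrightarrow> sat v 1 A \<and> sat v 2 A"
proof (induction A rule: SN_prov.induct)
  case (taut A)
  then show ?case using ceval_sat[of v 1 A] ceval_sat[of v 2 A]
    by (auto simp: tautology_def)
next
  case (A p)
  then show ?case by (auto simp: SN_model_def)
qed (auto simp: Iff_def)

lemma t1: "SN_prov A \<Longrightarrow> tautology (Imp A C) \<Longrightarrow> SN_prov C"
  using SN_prov.MP SN_prov.taut by blast

lemma pconj: "SN_prov A \<Longrightarrow> SN_prov B \<Longrightarrow> SN_prov (Conj A B)"
proof -
  assume a: "SN_prov A" and b: "SN_prov B"
  have "SN_prov (Imp A (Imp B (Conj A B)))" by (rule SN_prov.taut) (simp add: tautology_def)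
  then show ?thesis using a b SN_prov.MP by blast
qed

fun fT :: "'a fm \<Rightarrow> 'a fm" and nT :: "'a fm \<Rightarrow> 'a fm" where
  "fT (Atom p) = Atom p"
| "fT Top = Top"
| "fT Bot = Bot"
| "fT TT = TT"
| "fT (Neg A) = Neg (fT A)"
| "fT (Conj A B) = Conj (fT A) (fT B)"
| "fT (Disj A B) = Disj (fT A) (fT B)"
| "fT (Imp A B) = Imp (fT A) (fT B)"
| "fT (N A) = nT A"
| "nT (Atom p) = Neg (N (Neg (Atom p)))"
| "nT Top = Bot"
| "nT Bot = Top"
| "nT TT = TT"
| "nT (Neg A) = Neg (nT A)"
| "nT (Conj A B) = Disj (nT A) (nT B)"
| "nT (Disj A B) = Conj (nT A) (nT B)"
| "nT (Imp A B) = Conj (Neg (nT A)) (nT B)"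
| "nT (N A) = fT A"

lemma mono: "SN_prov (Imp A B) \<Longrightarrow> SN_prov (Imp (N B) (N A))"
proof -
  assume h: "SN_prov (Imp A B)"
  have "SN_prov (Neg (Conj A (Neg B)))" using h by (rule t1) (simp add: tautology_def)
  then have 1: "SN_prov (N (Neg (Neg (Conj A (Neg B)))))" by (rule SN_prov.Nec)
  have 2: "SN_prov (Iff (Neg (N (Neg (Conj A (Neg B))))) (N (Neg (Neg (Conj A (Neg B))))))"
    by (rule SN_prov.F)
  have 3: "SN_prov (Iff (Neg (N (Conj A (Neg B)))) (N (Neg (Conj A (Neg B)))))" by (rule SN_prov.F)
  have 4: "SN_prov (Iff (N (Conj A (Neg B))) (Disj (N A) (N (Neg B))))" by (rule SN_prov.K)
  have 5: "SN_prov (Iff (Neg (N B)) (N (Neg B)))" by (rule SN_prov.F)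
  show ?thesis using pconj[OF 1 pconj[OF 2 pconj[OF 3 pconj[OF 4 5]]]]
    by (rule t1) (unfold tautology_def Iff_def ceval.simps fT.simps nT.simps, blast)
qed

lemma cong: "SN_prov (Iff A B) \<Longrightarrow> SN_prov (Iff (N A) (N B))"
proof -
  assume h: "SN_prov (Iff A B)"
  have a: "SN_prov (Imp A B)" using h by (rule t1) (simp add: tautology_def Iff_def)
  have b: "SN_prov (Imp B A)" using h by (rule t1) (simp add: tautology_def Iff_def)
  show ?thesis using pconj[OF mono[OF a] mono[OF b]]
    by (rule t1) (unfold tautology_def Iff_def ceval.simps fT.simps nT.simps, blast)
qed

lemma NN: "SN_prov (Iff (N (N A)) A)"
proof -
  have 1: "SN_prov (Imp A (N (N A)))" by (rule SN_prov.C)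
  have 2: "SN_prov (Imp (Neg A) (N (N (Neg A))))" by (rule SN_prov.C)
  have 3: "SN_prov (Iff (N (Neg (N A))) (N (N (Neg A))))"
    by (rule cong) (rule SN_prov.F)
  have 4: "SN_prov (Iff (Neg (N (N A))) (N (Neg (N A))))" by (rule SN_prov.F)
  show ?thesis using pconj[OF 1 pconj[OF 2 pconj[OF 3 4]]]
    by (rule t1) (unfold tautology_def Iff_def ceval.simps fT.simps nT.simps, blast)
qed

lemma trans_main: "SN_prov (Iff A (fT A)) \<and> SN_prov (Iff (N A) (nT A))"
proof (induction A)
  case (Atom p)
  have "SN_prov (Iff (Neg (N (Atom p))) (N (Neg (Atom p))))" by (rule SN_prov.F)
  then have "SN_prov (Iff (N (Atom p)) (nT (Atom p)))"
    by (rule t1) (unfold tautology_def Iff_def ceval.simps fT.simps nT.simps, blast)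
  moreover have "SN_prov (Iff (Atom p) (fT (Atom p)))" by (rule SN_prov.taut) (simp add: tautology_def Iff_def)
  ultimately show ?case by simp
next
  case Top
  have 1: "SN_prov (N (Neg Top))" by (rule SN_prov.Nec) (rule SN_prov.taut, simp add: tautology_def)
  have 2: "SN_prov (Iff (Neg (N Top)) (N (Neg Top)))" by (rule SN_prov.F)
  have "SN_prov (Iff (N Top) Bot)" using pconj[OF 1 2]
    by (rule t1) (unfold tautology_def Iff_def ceval.simps fT.simps nT.simps, blast)
  moreover have "SN_prov (Iff (Top) (fT (Top)))" by (rule SN_prov.taut) (simp add: tautology_def Iff_def)
  ultimately show ?case by simp
next
  case Bot
  have 1: "SN_prov (N (Neg (Neg Bot)))" by (rule SN_prov.Nec) (rule SN_prov.taut, simp add: tautology_def)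
  have 2: "SN_prov (Iff (N (Neg (Neg Bot))) (N Bot))"
    by (rule cong) (rule SN_prov.taut, simp add: tautology_def Iff_def)
  have "SN_prov (Iff (N Bot) Top)" using pconj[OF 1 2]
    by (rule t1) (unfold tautology_def Iff_def ceval.simps fT.simps nT.simps, blast)
  moreover have "SN_prov (Iff (Bot) (fT (Bot)))" by (rule SN_prov.taut) (simp add: tautology_def Iff_def)
  ultimately show ?case by simp
next
  case TT
  have "SN_prov (Iff TT (fT TT))" by (rule SN_prov.taut) (simp add: tautology_def Iff_def)
  moreover have "SN_prov (Iff TT (N TT))" by (rule SN_prov.T)
  then have "SN_prov (Iff (N TT) (nT TT))"
    by (rule t1) (unfold tautology_def Iff_def ceval.simps fT.simps nT.simps, blast)
  ultimately show ?case by blast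
next
  case (Neg A)
  have 2: "SN_prov (Iff (Neg (N A)) (N (Neg A)))" by (rule SN_prov.F)
  from Neg have a: "SN_prov (Iff A (fT A))" and b: "SN_prov (Iff (N A) (nT A))" by auto
  have x: "SN_prov (Iff (Neg A) (fT (Neg A)))" using a
    by (rule t1) (unfold tautology_def Iff_def ceval.simps fT.simps nT.simps, blast)
  have y: "SN_prov (Iff (N (Neg A)) (nT (Neg A)))" using pconj[OF b 2]
    by (rule t1) (unfold tautology_def Iff_def ceval.simps fT.simps nT.simps, blast)
  show ?case using x y by blast
next
  case (Conj A B)
  from Conj have a: "SN_prov (Iff A (fT A))" and b: "SN_prov (Iff (N A) (nT A))"
    and c: "SN_prov (Iff B (fT B))" and d: "SN_prov (Iff (N B) (nT B))" by auto
  have k: "SN_prov (Iff (N (Conj A B)) (Disj (N A) (N B)))" by (rule SN_prov.K)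
  have x: "SN_prov (Iff (Conj A B) (fT (Conj A B)))" using pconj[OF a c]
    by (rule t1) (unfold tautology_def Iff_def ceval.simps fT.simps nT.simps, blast)
  have y: "SN_prov (Iff (N (Conj A B)) (nT (Conj A B)))" using pconj[OF k pconj[OF b d]]
    by (rule t1) (unfold tautology_def Iff_def ceval.simps fT.simps nT.simps, blast)
  show ?case using x y by blast
next
  case (Disj A B)
  from Disj have a: "SN_prov (Iff A (fT A))" and b: "SN_prov (Iff (N A) (nT A))"
    and c: "SN_prov (Iff B (fT B))" and d: "SN_prov (Iff (N B) (nT B))" by auto
  have 1: "SN_prov (Iff (N (Disj A B)) (N (Neg (Conj (Neg A) (Neg B)))))"
    by (rule cong) (rule SN_prov.taut, auto simp: tautology_def Iff_def)
  have 2: "SN_prov (Iff (Neg (N (Conj (Neg A) (Neg B)))) (N (Neg (Conj (Neg A) (Neg B)))))"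
    by (rule SN_prov.F)
  have 3: "SN_prov (Iff (N (Conj (Neg A) (Neg B))) (Disj (N (Neg A)) (N (Neg B))))" by (rule SN_prov.K)
  have 4: "SN_prov (Iff (Neg (N A)) (N (Neg A)))" by (rule SN_prov.F)
  have 5: "SN_prov (Iff (Neg (N B)) (N (Neg B)))" by (rule SN_prov.F)
  have x: "SN_prov (Iff (Disj A B) (fT (Disj A B)))" using pconj[OF a c]
    by (rule t1) (unfold tautology_def Iff_def ceval.simps fT.simps nT.simps, blast)
  have y: "SN_prov (Iff (N (Disj A B)) (nT (Disj A B)))"
    using pconj[OF 1 pconj[OF 2 pconj[OF 3 pconj[OF 4 pconj[OF 5 pconj[OF b d]]]]]]
    by (rule t1) (unfold tautology_def Iff_def ceval.simps fT.simps nT.simps, blast)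
  show ?case using x y by blast
next
  case (Imp A B)
  from Imp have a: "SN_prov (Iff A (fT A))" and b: "SN_prov (Iff (N A) (nT A))"
    and c: "SN_prov (Iff B (fT B))" and d: "SN_prov (Iff (N B) (nT B))" by auto
  have 1: "SN_prov (Iff (N (Imp A B)) (N (Neg (Conj A (Neg B)))))"
    by (rule cong) (rule SN_prov.taut, auto simp: tautology_def Iff_def)
  have 2: "SN_prov (Iff (Neg (N (Conj A (Neg B)))) (N (Neg (Conj A (Neg B)))))"
    by (rule SN_prov.F)
  have 3: "SN_prov (Iff (N (Conj A (Neg B))) (Disj (N A) (N (Neg B))))" by (rule SN_prov.K)
  have 5: "SN_prov (Iff (Neg (N B)) (N (Neg B)))" by (rule SN_prov.F)
  have x: "SN_prov (Iff (Imp A B) (fT (Imp A B)))" using pconj[OF a c]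
    by (rule t1) (unfold tautology_def Iff_def ceval.simps fT.simps nT.simps, blast)
  have y: "SN_prov (Iff (N (Imp A B)) (nT (Imp A B)))"
    using pconj[OF 1 pconj[OF 2 pconj[OF 3 pconj[OF 5 pconj[OF b d]]]]]
    by (rule t1) (unfold tautology_def Iff_def ceval.simps fT.simps nT.simps, blast)
  show ?case using x y by blast
next
  case (N A)
  from N have a: "SN_prov (Iff A (fT A))" and b: "SN_prov (Iff (N A) (nT A))" by auto
  have x: "SN_prov (Iff (N A) (fT (N A)))" using b by simp
  have y: "SN_prov (Iff (N (N A)) (nT (N A)))" using pconj[OF NN a]
    by (rule t1) (unfold tautology_def Iff_def ceval.simps fT.simps nT.simps, blast)
  show ?case using x y by blast
qed

lemma constr2: "SN_prov (Disj TT (Imp (N (Neg (Atom p))) (Atom p)))"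
proof -
  let ?X = "Imp TT (Imp (Atom p) (N (Neg (Atom p))))"
  have 1: "SN_prov (N (Neg ?X))" by (rule SN_prov.Nec) (rule SN_prov.A)
  have 2: "SN_prov (Iff (Neg (N ?X)) (N (Neg ?X)))" by (rule SN_prov.F)
  have 3: "SN_prov (Iff (N ?X) (nT ?X))" using trans_main by blast
  show ?thesis using pconj[OF 1 pconj[OF 2 3]]
    by (rule t1) (unfold tautology_def Iff_def ceval.simps fT.simps nT.simps, blast)
qed

fun atoms :: "'a fm \<Rightarrow> 'a list" where
  "atoms (Atom p) = [p]"
| "atoms Top = []"
| "atoms Bot = []"
| "atoms TT = []"
| "atoms (Neg A) = atoms A"
| "atoms (Conj A B) = atoms A @ atoms B"
| "atoms (Disj A B) = atoms A @ atoms B"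
| "atoms (Imp A B) = atoms A @ atoms B"
| "atoms (N A) = atoms A"

fun conjs :: "'a fm list \<Rightarrow> 'a fm" where
  "conjs [] = Top"
| "conjs (x # xs) = Conj x (conjs xs)"

lemma conjs_prov: "(\<forall>x\<in>set xs. SN_prov x) \<Longrightarrow> SN_prov (conjs xs)"
  by (induction xs) (auto intro: pconj SN_prov.taut simp: tautology_def)

lemma conjs_ceval: "ceval w (conjs xs) = (\<forall>x\<in>set xs. ceval w x)"
  by (induction xs) auto

definition cons :: "'a \<Rightarrow> 'a fm" where
  "cons p = Conj (Imp TT (Imp (Atom p) (N (Neg (Atom p))))) (Disj TT (Imp (N (Neg (Atom p))) (Atom p)))"

lemma agree:
  assumes "\<forall>p\<in>set (atoms A). w (Atom p) = sat v m (Atom p) \<and> w (N (Neg (Atom p))) = sat v m (N (Neg (Atom p)))"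
    and "w TT = sat v m TT"
  shows "ceval w (fT A) = sat v m (fT A) \<and> ceval w (nT A) = sat v m (nT A)"
  using assms
proof (induction A)
  case (Atom x)
  then show ?case by simp
qed auto

theorem theorem34:
  fixes A :: "'a fm"
  shows "(\<forall>v. SN_model v \<longrightarrow> sat v 1 A \<and> sat v 2 A) \<longleftrightarrow> SN_prov A"
proof
  assume "SN_prov A" then show "\<forall>v. SN_model v \<longrightarrow> sat v 1 A \<and> sat v 2 A"
    using soundness by blast
next
  assume valid: "\<forall>v. SN_model v \<longrightarrow> sat v 1 A \<and> sat v 2 A"
  let ?G = "conjs (map cons (atoms A))"
  have G: "SN_prov ?G"
    by (rule conjs_prov) (auto simp: cons_def intro!: pconj SN_prov.A constr2)
  have eq: "SN_prov (Iff A (fT A))" using trans_main by blast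
  have T: "tautology (Imp ?G (fT A))"
    unfolding tautology_def ceval.simps(8)
  proof (intro allI impI)
    fix w assume "ceval w ?G"
    then have c: "\<forall>p\<in>set (atoms A). ceval w (cons p)" by (simp add: conjs_ceval)
    define m :: nat where "m = (if w TT then 1 else 2)"
    define v where "v p = {k. p \<in> set (atoms A) \<and> (k = m \<and> w (Atom p) \<or> k = 3 - m \<and> w (N (Neg (Atom p))))}" for p
    have mv: "SN_model v"
      unfolding SN_model_def v_def m_def using c by (auto simp: cons_def)
    have ag: "ceval w (fT A) = sat v m (fT A)"
      by (rule agree[THEN conjunct1]) (auto simp: v_def m_def)
    have m12: "m = 1 \<or> m = 2" by (auto simp: m_def)
    have "sat v m (Iff A (fT A))" using soundness[OF eq mv] m12 by auto
    moreover have "sat v m A" using valid mv m12 by auto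
    ultimately show "ceval w (fT A)" using ag by (simp add: Iff_def)
  qed
  have fA: "SN_prov (fT A)" using SN_prov.MP[OF SN_prov.taut[OF T] G] .
  have "tautology (Imp (Conj (Iff A (fT A)) (fT A)) A)"
    unfolding tautology_def Iff_def by simp
  then show "SN_prov A" using t1[OF pconj[OF eq fA]] by blast
qed

end
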